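(* Let $\Omega$, $\gamma\in(0,1)$ and $\varphi:\mathcal H\to\Omega$ be as follows: $\Omega\subset\{|z|>e^\gamma\}$ is an unbounded simply connected domain, $\varphi$ is conformal with $|\varphi(\xi_n)|\to\infty$ whenever $|\xi_n|\to\infty$, and there is $M$ with $|\varphi(\xi)|\le M|\varphi(\xi')|$ for all $\xi,\xi'\in Q_T\setminus Q_{T/8}$ and all large $T$. Let $t\in\mathbb R$ and $R\ge\gamma$. Then $$\limsup_{r\to0}\beta_{\varphi_{R/r}}(r,t)=\limsup_{T\to+\infty}\beta_{\varphi_T}(1/T,t),$$ and this quantity is finite and does not depend on $R\ge\gamma$.
   Context: $\mathcal H=\{\Re\xi>0\}$; $Q_T=\{0<\Re\xi<4T,\ |\Im\xi|<4T\}$; $\varphi_T(\xi)=\varphi(T\xi)/|\varphi(T)|$; for a conformal map $h$ on $Q_2$, $r\in(0,1)$, $t\in\mathbb R$: $\beta_h(r,t)=\frac{\log\int_I|h'(r+iy)|^t\,dy}{\log(1/r)}$ with $I=[-2,-1]\cup[1,2]$. *)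

theory Defs
  imports "HOL-Complex_Analysis.Complex_Analysis"
begin

definition halfplane :: "complex set" where
  "halfplane = {\<xi>. Re \<xi> > 0}"

definition Qbox :: "real \<Rightarrow> complex set" where
  "Qbox T = {\<xi>. 0 < Re \<xi> \<and> Re \<xi> < 4 * T \<and> \<bar>Im \<xi>\<bar> < 4 * T}"

definition phiT :: "(complex \<Rightarrow> complex) \<Rightarrow> real \<Rightarrow> complex \<Rightarrow> complex" where
  "phiT \<phi> T = (\<lambda>\<xi>. \<phi> (of_real T * \<xi>) / of_real (cmod (\<phi> (of_real T))))"

definition Iset :: "real set" where
  "Iset = {-2..-1} \<union> {1..2}"

definition beta :: "(complex \<Rightarrow> complex) \<Rightarrow> real \<Rightarrow> real \<Rightarrow> real" where
  "beta h r t = ln (integral Iset (\<lambda>y. cmod (deriv h (Complex r y)) powr t)) / ln (1 / r)"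

end

theory Submission
  imports Defs
begin

lemma weak_koebe:
  obtains C :: real where "C > 0" and
    "\<And>F a \<rho> w. F holomorphic_on ball a \<rho> \<Longrightarrow> inj_on F (ball a \<rho>) \<Longrightarrow> 0 < \<rho> \<Longrightarrow>
       w \<notin> F ` ball a \<rho> \<Longrightarrow> cmod (deriv F a) * \<rho> \<le> C * cmod (F a - w)"
proof -
  obtain Rf where Rpos: "\<And>z. 0 < Rf z" and
    L: "\<And>f. f holomorphic_on cball 0 (Rf (f 0)) \<Longrightarrow>
          (\<And>z. norm z \<le> Rf (f 0) \<Longrightarrow> f z \<noteq> 0 \<and> f z \<noteq> 1) \<Longrightarrow> norm (deriv f 0) < 1"
    using Landau_Picard by metis
  define R1 where "R1 = Rf (-1)"
  have R1: "R1 > 0" using Rpos by (simp add: R1_def)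
  show ?thesis
  proof (rule that[of "4 * R1"])
    show "4 * R1 > 0" using R1 by simp
    fix F a \<rho> w
    assume holF: "F holomorphic_on ball a \<rho>" and inj: "inj_on F (ball a \<rho>)" and \<rho>: "0 < \<rho>"
      and w: "w \<notin> F ` ball a \<rho>"
    have a: "a \<in> ball a \<rho>" using \<rho> by simp
    have nz: "F z - w \<noteq> 0" if "z \<in> ball a \<rho>" for z using w that by force
    obtain g where holg: "g holomorphic_on ball a \<rho>" and eg: "\<And>z. z \<in> ball a \<rho> \<Longrightarrow> exp (g z) = F z - w"
    proof -
      have "(\<lambda>z. F z - w) holomorphic_on ball a \<rho>" using holF by (intro holomorphic_intros)
      then show ?thesis using holomorphic_logarithm_exists[of "ball a \<rho>" "\<lambda>z. F z - w" a] that nz a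
        by auto
    qed
    define q where "q z = exp (g z / 2)" for z
    have q2: "(q z)^2 = F z - w" if "z \<in> ball a \<rho>" for z
      using eg[OF that] by (simp add: q_def power2_eq_square flip: exp_add)
    have qnz: "q z \<noteq> 0" for z by (simp add: q_def)
    define s where "s = \<rho> / (2 * R1)"
    have s: "s > 0" using \<rho> R1 by (simp add: s_def)
    define G where "G u = - q (a + of_real s * u) / q a" for u
    have G0: "G 0 = -1" using qnz by (simp add: G_def)
    have sub: "a + of_real s * u \<in> ball a \<rho>" if "norm u \<le> R1" for u
    proof -
      have "norm (of_real s * u) \<le> s * R1" using that s by (simp add: norm_mult mult_left_mono)
      also have "\<dots> < \<rho>" using \<rho> R1 by (simp add: s_def)
      finally show ?thesis by (simp add: dist_norm)
    qed
    have g': "(g has_field_derivative deriv g a) (at a)"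
      using holg a by (meson holomorphic_derivI open_ball)
    have l1: "((\<lambda>u. a + of_real s * u) has_field_derivative of_real s) (at 0)"
      by (auto intro!: derivative_eq_intros)
    have l2: "((\<lambda>u. g (a + of_real s * u)) has_field_derivative deriv g a * of_real s) (at 0)"
      using DERIV_chain2[OF _ l1, of g "deriv g a"] g' by simp
    have l3: "((\<lambda>u. exp (g (a + of_real s * u) / 2)) has_field_derivative
               exp (g a / 2) * (deriv g a * of_real s / 2)) (at 0)"
      using DERIV_chain2[OF DERIV_exp, of "\<lambda>u. g (a + of_real s * u) / 2"] l2
      by (auto intro!: derivative_eq_intros)
    have "(G has_field_derivative - (exp (g a / 2) * (deriv g a * of_real s / 2)) / q a) (at 0)"
      unfolding G_def q_def by (rule DERIV_cdivide[OF DERIV_minus[OF l3]])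
    hence dG: "deriv G 0 = - of_real s * deriv g a / 2"
      using qnz by (simp add: DERIV_imp_deriv q_def field_simps)
    have holG: "G holomorphic_on cball 0 (Rf (G 0))"
    proof -
      have "(\<lambda>u. a + of_real s * u) ` cball 0 R1 \<subseteq> ball a \<rho>" using sub by auto
      then have "(g \<circ> (\<lambda>u. a + of_real s * u)) holomorphic_on cball 0 R1"
        by (intro holomorphic_on_compose holomorphic_on_subset[OF holg]) (auto intro!: holomorphic_intros)
      then have "G holomorphic_on cball 0 R1" unfolding G_def q_def
        by (auto intro!: holomorphic_intros simp: o_def)
      then show ?thesis by (simp add: G0 R1_def)
    qed
    have "norm (deriv G 0) < 1"
    proof (rule L[OF holG])
      fix z :: complex assume "norm z \<le> Rf (G 0)"
      hence z: "norm z \<le> R1" by (simp add: G0 R1_def)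
      show "G z \<noteq> 0 \<and> G z \<noteq> 1"
      proof
        show "G z \<noteq> 0" using qnz by (simp add: G_def)
        show "G z \<noteq> 1"
        proof
          assume "G z = 1"
          hence e: "q (a + of_real s * z) = - q a" using qnz[of a] unfolding G_def
            by (metis (no_types, lifting) add.inverse_inverse nonzero_mult_div_cancel_left mult_cancel_right1 minus_divide_left nonzero_divide_eq_eq)
          hence "F (a + of_real s * z) - w = F a - w"
            using q2[OF sub[OF z]] q2[OF a] by simp
          hence "a + of_real s * z = a" using inj sub[OF z] a by (auto dest: inj_onD)
          hence "q a = - q a" using e by (metis add_0_iff)
          thus False using qnz by simp
        qed
      qed
    qed
    hence gb: "cmod (deriv g a) < 2 / s" using s by (simp add: dG norm_mult field_simps)
    have dF: "deriv F a = exp (g a) * deriv g a"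
    proof -
      have d1: "((\<lambda>z. exp (g z) + w) has_field_derivative exp (g a) * deriv g a) (at a)"
        using g' by (auto intro!: derivative_eq_intros)
      have e1: "\<And>z. z \<in> ball a \<rho> \<Longrightarrow> exp (g z) + w = F z" using eg by simp
      have "(F has_field_derivative exp (g a) * deriv g a) (at a)"
        by (rule has_field_derivative_transform_within_open[OF d1 open_ball a e1])
      thus ?thesis by (rule DERIV_imp_deriv)
    qed
    have "cmod (deriv F a) * \<rho> = cmod (deriv g a) * \<rho> * cmod (F a - w)"
      using eg[OF a] by (simp add: dF norm_mult)
    also have "\<dots> \<le> (2 / s) * \<rho> * cmod (F a - w)"
      using gb \<rho> by (intro mult_right_mono) auto
    also have "(2 / s) * \<rho> = 4 * R1" using \<rho> R1 by (simp add: s_def)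
    finally show "cmod (deriv F a) * \<rho> \<le> 4 * R1 * cmod (F a - w)" .
  qed
qed


lemma distortion:
  obtains K :: real where "K > 0" and
    "\<And>F a \<rho>. F holomorphic_on ball a \<rho> \<Longrightarrow> inj_on F (ball a \<rho>) \<Longrightarrow> 0 < \<rho> \<Longrightarrow>
       cmod (deriv (deriv F) a) * \<rho> \<le> K * cmod (deriv F a)"
proof -
  obtain C :: real where C: "C > 0" and WK:
    "\<And>F a \<rho> w. F holomorphic_on ball a \<rho> \<Longrightarrow> inj_on F (ball a \<rho>) \<Longrightarrow> 0 < \<rho> \<Longrightarrow>
       w \<notin> F ` ball a \<rho> \<Longrightarrow> cmod (deriv F a) * \<rho> \<le> C * cmod (F a - w)"
    using weak_koebe by metis
  show ?thesis
  proof (rule that[of "8 * C^2"])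
    show "8 * C^2 > 0" using C by simp
    fix F a \<rho>
    assume holF: "F holomorphic_on ball a \<rho>" and inj: "inj_on F (ball a \<rho>)" and \<rho>: "0 < \<rho>"
    have a: "a \<in> ball a \<rho>" using \<rho> by simp
    define d where "d = deriv F a"
    have d0: "d \<noteq> 0" unfolding d_def
      using holomorphic_injective_imp_regular[OF holF open_ball inj a] .
    define r0 where "r0 = cmod d * \<rho> / C"
    have r0: "r0 > 0" using d0 \<rho> C by (simp add: r0_def)
    have sub: "ball (F a) r0 \<subseteq> F ` ball a \<rho>"
    proof
      fix w assume w: "w \<in> ball (F a) r0"
      show "w \<in> F ` ball a \<rho>"
      proof (rule ccontr)
        assume "w \<notin> F ` ball a \<rho>"
        from WK[OF holF inj \<rho> this] have "cmod d * \<rho> \<le> C * cmod (F a - w)" by (simp add: d_def)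
        also have "\<dots> < C * r0" using w C by (simp add: dist_norm)
        also have "\<dots> = cmod d * \<rho>" using C by (simp add: r0_def)
        finally show False by simp
      qed
    qed
    obtain G where holG: "G holomorphic_on (F ` ball a \<rho>)"
      and dFG: "\<And>z. z \<in> ball a \<rho> \<Longrightarrow> deriv F z * deriv G (F z) = 1"
      and GF: "\<And>z. z \<in> ball a \<rho> \<Longrightarrow> G (F z) = z"
      using holomorphic_has_inverse[OF holF open_ball inj] by metis
    have openI: "open (F ` ball a \<rho>)" by (rule open_mapping_thm3[OF holF open_ball inj])
    define r1 where "r1 = r0 / 2"
    have r1: "r1 > 0" using r0 by (simp add: r1_def)
    have sub1: "cball (F a) r1 \<subseteq> F ` ball a \<rho>"
      using sub r0 by (force simp: r1_def)
    have "cmod ((deriv ^^ 2) G (F a)) \<le> fact 2 * \<rho> / r1^2"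
    proof (rule Cauchy_higher_deriv_bound[where y=a])
      show "G holomorphic_on ball (F a) r1" using holG sub1 ball_subset_cball
        by (meson holomorphic_on_subset order_trans)
      show "continuous_on (cball (F a) r1) G"
        using holG sub1 holomorphic_on_imp_continuous_on holomorphic_on_subset by blast
      fix w assume "w \<in> ball (F a) r1"
      then have "w \<in> F ` ball a \<rho>" using sub1 ball_subset_cball by blast
      then obtain z where z: "z \<in> ball a \<rho>" "w = F z" by blast
      then show "G w \<in> ball a \<rho>" using GF by simp
    qed (use r1 in auto)
    hence G2: "cmod (deriv (deriv G) (F a)) \<le> 2 * \<rho> / r1^2"
      by (simp add: numeral_2_eq_2)
    have G1: "deriv G (F a) = 1 / d" using dFG[OF a] d0 by (simp add: d_def field_simps)
    have hF1: "(deriv F has_field_derivative deriv (deriv F) a) (at a)"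
      using holomorphic_derivI[OF holomorphic_deriv[OF holF open_ball] open_ball a] .
    have hF0: "(F has_field_derivative d) (at a)"
      using holomorphic_derivI[OF holF open_ball a] by (simp add: d_def)
    have Fa: "F a \<in> F ` ball a \<rho>" using a by simp
    have hG1: "(deriv G has_field_derivative deriv (deriv G) (F a)) (at (F a))"
      using holomorphic_derivI[OF holomorphic_deriv[OF holG openI] openI Fa] .
    have hcomp: "((\<lambda>z. deriv G (F z)) has_field_derivative deriv (deriv G) (F a) * d) (at a)"
      using DERIV_chain2[OF hG1 hF0] .
    have hprod: "((\<lambda>z. deriv F z * deriv G (F z)) has_field_derivative
        deriv (deriv F) a * deriv G (F a) + deriv (deriv G) (F a) * d * deriv F a) (at a)"
      using DERIV_mult[OF hF1 hcomp] .
    have hconst: "((\<lambda>z. deriv F z * deriv G (F z)) has_field_derivative 0) (at a)"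
      by (rule has_field_derivative_transform_within_open[OF DERIV_const open_ball a])
         (use dFG in simp)
    have eq: "deriv (deriv F) a * deriv G (F a) + deriv (deriv G) (F a) * d * deriv F a = 0"
      using DERIV_unique[OF hprod hconst] .
    hence "deriv (deriv F) a = -(d ^ 3) * deriv (deriv G) (F a)"
      using d0 unfolding G1 d_def[symmetric] by (simp add: field_simps power3_eq_cube add_eq_0_iff)
    hence "cmod (deriv (deriv F) a) = (cmod d) ^ 3 * cmod (deriv (deriv G) (F a))"
      by (simp add: norm_mult norm_power)
    also have "\<dots> \<le> (cmod d) ^ 3 * (2 * \<rho> / r1^2)"
      by (intro mult_left_mono G2) auto
    also have "\<dots> = 8 * C^2 * cmod d / \<rho>"
      using d0 \<rho> C by (simp add: r1_def r0_def field_simps power2_eq_square power3_eq_cube)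
    finally show "cmod (deriv (deriv F) a) * \<rho> \<le> 8 * C^2 * cmod (deriv F a)"
      using \<rho> by (simp add: d_def[symmetric] field_simps)
  qed
qed

lemma halfplane_open: "open halfplane"
  unfolding halfplane_def by (simp add: open_halfspace_Re_gt)

lemma path_horiz:
  assumes holL: "L holomorphic_on halfplane"
    and bd: "\<And>\<xi>. \<xi> \<in> halfplane \<Longrightarrow> cmod (deriv L \<xi>) * Re \<xi> \<le> K"
    and x1: "0 < x1" and x2: "0 < x2"
  shows "cmod (L (Complex x1 y) - L (Complex x2 y)) \<le> K * \<bar>ln x1 - ln x2\<bar>"
proof -
  define f where "f u = L (exp u + \<i> * of_real y)" for u
  have df: "(f has_field_derivative deriv L (exp u + \<i> * of_real y) * exp u) (at u within \<real>)"
    if uR: "u \<in> \<real>" for u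
  proof -
    obtain r where r: "u = of_real r" using uR unfolding Reals_def by blast
    have mem: "exp u + \<i> * of_real y \<in> halfplane" using r by (simp add: halfplane_def Re_exp)
    have dL: "(L has_field_derivative deriv L (exp u + \<i> * of_real y)) (at (exp u + \<i> * of_real y))"
      using holomorphic_derivI[OF holL halfplane_open mem] .
    have "((\<lambda>u. exp u + \<i> * of_real y) has_field_derivative exp u) (at u)"
      by (auto intro!: derivative_eq_intros)
    from DERIV_chain2[OF dL this] show ?thesis unfolding f_def
      by (rule has_field_derivative_at_within)
  qed
  have bnd: "cmod (deriv L (exp u + \<i> * of_real y) * exp u) \<le> K" if uR: "u \<in> \<real>" for u
  proof -
    obtain r where r: "u = of_real r" using uR unfolding Reals_def by blast
    have mem: "exp u + \<i> * of_real y \<in> halfplane" using r by (simp add: halfplane_def Re_exp)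
    have "cmod (exp u) = Re (exp u + \<i> * of_real y)" using r by (simp add: Re_exp norm_exp_eq_Re)
    then show ?thesis using bd[OF mem] by (simp add: norm_mult)
  qed
  have "cmod (f (of_real (ln x1)) - f (of_real (ln x2))) \<le> K * cmod (of_real (ln x1) - of_real (ln x2) :: complex)"
    by (rule field_differentiable_bound[OF convex_Reals df bnd]) auto
  moreover have "f (of_real (ln x1)) = L (Complex x1 y)" "f (of_real (ln x2)) = L (Complex x2 y)"
    using x1 x2 by (simp_all add: f_def Complex_eq exp_of_real)
  ultimately show ?thesis by (simp flip: of_real_diff)
qed

lemma path_vert:
  assumes holL: "L holomorphic_on halfplane"
    and bd: "\<And>\<xi>. \<xi> \<in> halfplane \<Longrightarrow> cmod (deriv L \<xi>) * Re \<xi> \<le> K"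
    and x: "0 < x"
  shows "cmod (L (Complex x y1) - L (Complex x y2)) \<le> K / x * \<bar>y1 - y2\<bar>"
proof -
  define f where "f u = L (of_real x + \<i> * u)" for u
  have df: "(f has_field_derivative deriv L (of_real x + \<i> * u) * \<i>) (at u within \<real>)"
    if uR: "u \<in> \<real>" for u
  proof -
    obtain r where r: "u = of_real r" using uR unfolding Reals_def by blast
    have mem: "of_real x + \<i> * u \<in> halfplane" using r x by (simp add: halfplane_def)
    have dL: "(L has_field_derivative deriv L (of_real x + \<i> * u)) (at (of_real x + \<i> * u))"
      using holomorphic_derivI[OF holL halfplane_open mem] .
    have "((\<lambda>u. of_real x + \<i> * u) has_field_derivative \<i>) (at u)"
      by (auto intro!: derivative_eq_intros)
    from DERIV_chain2[OF dL this] show ?thesis unfolding f_def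
      by (rule has_field_derivative_at_within)
  qed
  have bnd: "cmod (deriv L (of_real x + \<i> * u) * \<i>) \<le> K / x" if uR: "u \<in> \<real>" for u
  proof -
    obtain r where r: "u = of_real r" using uR unfolding Reals_def by blast
    have mem: "of_real x + \<i> * u \<in> halfplane" using r x by (simp add: halfplane_def)
    have "Re (of_real x + \<i> * u) = x" using r by simp
    then show ?thesis using bd[OF mem] x by (simp add: norm_mult field_simps)
  qed
  have "cmod (f (of_real y1) - f (of_real y2)) \<le> K / x * cmod (of_real y1 - of_real y2 :: complex)"
    by (rule field_differentiable_bound[OF convex_Reals df bnd]) auto
  moreover have "f (of_real y1) = L (Complex x y1)" "f (of_real y2) = L (Complex x y2)"
    by (simp_all add: f_def Complex_eq)
  ultimately show ?thesis by (simp flip: of_real_diff)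
qed

lemma Iset_compact: "compact Iset"
  unfolding Iset_def by (intro compact_Un compact_Icc)

lemma Iset_ne: "Iset \<noteq> {}"
  unfolding Iset_def by auto

lemma Iset_negl: "negligible ({-2..-1} \<inter> {1..(2::real)})"
  by (simp add: Int_commute)

lemma Iset_integrable:
  fixes f :: "real \<Rightarrow> real"
  assumes "continuous_on Iset f"
  shows "f integrable_on Iset"
proof -
  have "f integrable_on {-2..-1}" using assms
    by (intro integrable_continuous_interval) (auto simp: Iset_def intro: continuous_on_subset)
  moreover have "f integrable_on {1..2}" using assms
    by (intro integrable_continuous_interval) (auto simp: Iset_def intro: continuous_on_subset)
  ultimately show ?thesis unfolding Iset_def by (rule integrable_Un[OF Iset_negl])
qed

lemma Iset_const: "integral Iset (\<lambda>y. c) = 2 * (c::real)"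
proof -
  have "((\<lambda>y. c) has_integral (2 * c)) Iset"
    using has_integral_Un[OF has_integral_const_real[of c "-2" "-1"] has_integral_const_real[of c 1 2] Iset_negl]
    by (simp add: Iset_def)
  then show ?thesis by (simp add: integral_unique)
qed

lemma Iset_pos:
  fixes g :: "real \<Rightarrow> real"
  assumes "continuous_on Iset g"
  shows "integral Iset (\<lambda>y. exp (g y)) > 0"
proof -
  obtain y0 where "y0 \<in> Iset" and m: "\<And>y. y \<in> Iset \<Longrightarrow> g y0 \<le> g y"
    using continuous_attains_inf[OF Iset_compact Iset_ne assms] by blast
  have "integral Iset (\<lambda>y. exp (g y0)) \<le> integral Iset (\<lambda>y. exp (g y))"
    using m assms by (intro integral_le Iset_integrable continuous_intros) auto
  moreover have "integral Iset (\<lambda>y. exp (g y0)) > 0" by (simp add: Iset_const)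
  ultimately show ?thesis by linarith
qed

lemma Iset_ln_bound:
  fixes g1 g2 :: "real \<Rightarrow> real"
  assumes c1: "continuous_on Iset g1" and c2: "continuous_on Iset g2"
    and b: "\<And>y. y \<in> Iset \<Longrightarrow> \<bar>g1 y - g2 y\<bar> \<le> D"
  shows "\<bar>ln (integral Iset (\<lambda>y. exp (g1 y))) - ln (integral Iset (\<lambda>y. exp (g2 y)))\<bar> \<le> D"
proof -
  have gen: "ln (integral Iset (\<lambda>y. exp (h1 y))) \<le> D + ln (integral Iset (\<lambda>y. exp (h2 y)))"
    if ch1: "continuous_on Iset h1" and ch2: "continuous_on Iset h2"
      and hb: "\<And>y. y \<in> Iset \<Longrightarrow> h1 y \<le> D + h2 y" for h1 h2 :: "real \<Rightarrow> real"
  proof -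
    have "integral Iset (\<lambda>y. exp (h1 y)) \<le> integral Iset (\<lambda>y. exp D * exp (h2 y))"
      using hb ch1 ch2 by (intro integral_le Iset_integrable continuous_intros) (auto simp flip: exp_add)
    also have "\<dots> = exp D * integral Iset (\<lambda>y. exp (h2 y))" by simp
    finally have "ln (integral Iset (\<lambda>y. exp (h1 y))) \<le> ln (exp D * integral Iset (\<lambda>y. exp (h2 y)))"
      using Iset_pos[OF ch1] by simp
    also have "\<dots> = D + ln (integral Iset (\<lambda>y. exp (h2 y)))"
      using Iset_pos[OF ch2] by (simp add: ln_mult)
    finally show ?thesis .
  qed
  have "ln (integral Iset (\<lambda>y. exp (g1 y))) \<le> D + ln (integral Iset (\<lambda>y. exp (g2 y)))"
    by (intro gen c1 c2) (smt (verit) b)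
  moreover have "ln (integral Iset (\<lambda>y. exp (g2 y))) \<le> D + ln (integral Iset (\<lambda>y. exp (g1 y)))"
    by (intro gen c1 c2) (smt (verit) b)
  ultimately show ?thesis by linarith
qed

lemma Limsup_diff_le:
  fixes u v :: "real \<Rightarrow> real"
  assumes "((\<lambda>x. u x - v x) \<longlongrightarrow> 0) at_top"
  shows "Limsup at_top (\<lambda>x. ereal (u x)) \<le> Limsup at_top (\<lambda>x. ereal (v x))"
proof (rule ereal_le_epsilon2)
  fix e :: real assume e: "0 < e"
  have "eventually (\<lambda>x. dist (u x - v x) 0 < e) at_top"
    using assms e by (rule tendstoD)
  hence ev: "eventually (\<lambda>x. ereal (u x) \<le> ereal (v x) + ereal e) at_top"
    by eventually_elim (auto simp: dist_norm)
  have "Limsup at_top (\<lambda>x. ereal (u x)) \<le> Limsup at_top (\<lambda>x. ereal (v x) + ereal e)"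
    by (rule Limsup_mono[OF ev])
  also have "\<dots> = Limsup at_top (\<lambda>x. ereal (v x)) + ereal e"
    by (rule Limsup_add_ereal_right) auto
  finally show "Limsup at_top (\<lambda>x. ereal (u x)) \<le> Limsup at_top (\<lambda>x. ereal (v x)) + ereal e" .
qed

lemma Limsup_diff_eq:
  fixes u v :: "real \<Rightarrow> real"
  assumes "((\<lambda>x. u x - v x) \<longlongrightarrow> 0) at_top"
  shows "Limsup at_top (\<lambda>x. ereal (u x)) = Limsup at_top (\<lambda>x. ereal (v x))"
proof (rule antisym)
  show "Limsup at_top (\<lambda>x. ereal (u x)) \<le> Limsup at_top (\<lambda>x. ereal (v x))"
    by (rule Limsup_diff_le[OF assms])
  have "((\<lambda>x. - (u x - v x)) \<longlongrightarrow> - 0) at_top" using assms by (rule tendsto_minus)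
  then have "((\<lambda>x. v x - u x) \<longlongrightarrow> 0) at_top" by simp
  then show "Limsup at_top (\<lambda>x. ereal (v x)) \<le> Limsup at_top (\<lambda>x. ereal (u x))"
    by (rule Limsup_diff_le)
qed

lemma Limsup_scale:
  fixes f :: "real \<Rightarrow> ereal" and R :: real
  assumes R: "R > 0"
  shows "Limsup at_top (\<lambda>T. f (R * T)) = Limsup at_top f"
proof -
  have fm: "filtermap (\<lambda>T. R * T) at_top = at_top"
  proof (rule filtermap_fun_inverse[where g="\<lambda>T. inverse R * T"])
    show "filterlim (\<lambda>T. inverse R * T) at_top at_top"
      using R by (intro filterlim_tendsto_pos_mult_at_top[OF tendsto_const]) (auto simp: filterlim_ident)
    show "filterlim (\<lambda>T. R * T) at_top at_top"
      using R by (intro filterlim_tendsto_pos_mult_at_top[OF tendsto_const]) (auto simp: filterlim_ident)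
    show "eventually (\<lambda>x. R * (inverse R * x) = x) at_top" using R by simp
  qed
  have "inj (\<lambda>T. R * T)" using R by (auto intro: injI)
  from Limsup_filtermap_eq[OF this, of at_top f] show ?thesis by (simp add: fm)
qed

lemma Limsup_inverse:
  fixes f :: "real \<Rightarrow> ereal"
  shows "Limsup (at_right 0) (\<lambda>r. f (inverse r)) = Limsup at_top f"
proof -
  have "inj (inverse :: real \<Rightarrow> real)" by (auto intro: injI simp: inverse_eq_iff_eq)
  from Limsup_filtermap_eq[OF this, of "at_right 0" f] show ?thesis
    by (simp flip: at_top_to_right)
qed


lemma deriv_exp_log:
  assumes holg: "g holomorphic_on S" and S: "open S" and eg: "\<And>z. z \<in> S \<Longrightarrow> exp (g z) = f z"
    and \<xi>: "\<xi> \<in> S"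
  shows "deriv f \<xi> = f \<xi> * deriv g \<xi>"
proof -
  have g': "(g has_field_derivative deriv g \<xi>) (at \<xi>)"
    using holomorphic_derivI[OF holg S \<xi>] .
  have d1: "((\<lambda>z. exp (g z)) has_field_derivative exp (g \<xi>) * deriv g \<xi>) (at \<xi>)"
    using g' by (auto intro!: derivative_eq_intros)
  have "(f has_field_derivative exp (g \<xi>) * deriv g \<xi>) (at \<xi>)"
    by (rule has_field_derivative_transform_within_open[OF d1 S \<xi> eg])
  then show ?thesis using eg[OF \<xi>] by (simp add: DERIV_imp_deriv)
qed

lemma deriv_phiT:
  assumes hol: "\<phi> holomorphic_on halfplane" and S: "S > 0" and x: "x > 0"
  shows "deriv (phiT \<phi> S) (Complex x y) =
           of_real S * deriv \<phi> (Complex (S * x) (S * y)) / of_real (cmod (\<phi> (of_real S)))"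
proof -
  define c where "c = (of_real (cmod (\<phi> (of_real S))) :: complex)"
  have eqp: "of_real S * Complex x y = Complex (S * x) (S * y)"
    by (simp add: Complex_eq algebra_simps)
  have mem: "Complex (S * x) (S * y) \<in> halfplane" using S x by (simp add: halfplane_def)
  have d\<phi>: "(\<phi> has_field_derivative deriv \<phi> (Complex (S * x) (S * y))) (at (of_real S * Complex x y))"
    unfolding eqp using holomorphic_derivI[OF hol halfplane_open mem] .
  have dl: "((\<lambda>\<xi>. of_real S * \<xi>) has_field_derivative of_real S) (at (Complex x y))"
    by (auto intro!: derivative_eq_intros)
  have "((\<lambda>\<xi>. \<phi> (of_real S * \<xi>)) has_field_derivative deriv \<phi> (Complex (S * x) (S * y)) * of_real S) (at (Complex x y))"
    using DERIV_chain2[OF d\<phi> dl] .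
  from DERIV_cdivide[OF this, of c]
  have "(phiT \<phi> S has_field_derivative deriv \<phi> (Complex (S * x) (S * y)) * of_real S / c) (at (Complex x y))"
    unfolding phiT_def c_def .
  then show ?thesis unfolding c_def by (simp add: DERIV_imp_deriv mult.commute)
qed

lemma alg_bound:
  fixes a b p q r D M :: real
  assumes p: "p > 0" and q: "q > 0" and ab: "\<bar>a - b\<bar> \<le> D" and b: "\<bar>b\<bar> \<le> M * q" and qr: "q = r + p"
  shows "\<bar>a / p - b / q\<bar> \<le> (D + M * \<bar>r\<bar>) / p"
proof -
  have e: "a / p - b / q = ((a - b) + (b / q) * r) / p"
    using p q qr by (simp add: field_simps)
  have "\<bar>b / q\<bar> \<le> M" using b q by (simp add: abs_div pos_divide_le_eq)
  hence "\<bar>b / q\<bar> * \<bar>r\<bar> \<le> M * \<bar>r\<bar>" by (intro mult_right_mono) auto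
  hence "\<bar>(b / q) * r\<bar> \<le> M * \<bar>r\<bar>" by (simp only: abs_mult)
  hence "\<bar>(a - b) + (b / q) * r\<bar> \<le> D + M * \<bar>r\<bar>" using ab by linarith
  then show ?thesis unfolding e using p by (simp add: abs_div divide_right_mono)
qed

theorem lemma3p2:
  fixes \<Omega> :: "complex set" and \<gamma> :: real and \<phi> :: "complex \<Rightarrow> complex"
    and t R :: real
  assumes \<gamma>: "0 < \<gamma>" "\<gamma> < 1"
    and \<Omega>_open: "open \<Omega>" and \<Omega>_sc: "simply_connected \<Omega>"
    and \<Omega>_ne: "\<Omega> \<noteq> {}" and \<Omega>_unb: "\<not> bounded \<Omega>"
    and \<Omega>_sub: "\<Omega> \<subseteq> {z. cmod z > exp \<gamma>}"
    and \<phi>_hol: "\<phi> holomorphic_on halfplane"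
    and \<phi>_inj: "inj_on \<phi> halfplane"
    and \<phi>_onto: "\<phi> ` halfplane = \<Omega>"
    and \<phi>_inf: "\<And>\<xi>. (\<forall>n. \<xi> n \<in> halfplane) \<Longrightarrow>
               filterlim (\<lambda>n. cmod (\<xi> n)) at_top sequentially \<Longrightarrow>
               filterlim (\<lambda>n. cmod (\<phi> (\<xi> n))) at_top sequentially"
    and \<phi>_M: "\<exists>M. \<forall>\<^sub>F T in at_top. \<forall>\<xi>\<in>Qbox T - Qbox (T / 8). \<forall>\<xi>'\<in>Qbox T - Qbox (T / 8).
               cmod (\<phi> \<xi>) \<le> M * cmod (\<phi> \<xi>')"
    and R: "R \<ge> \<gamma>"
  shows "Limsup at_top (\<lambda>T. ereal (beta (phiT \<phi> T) (1 / T) t)) \<noteq> \<infinity>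
       \<and> Limsup at_top (\<lambda>T. ereal (beta (phiT \<phi> T) (1 / T) t)) \<noteq> -\<infinity>
       \<and> Limsup (at_right 0) (\<lambda>r. ereal (beta (phiT \<phi> (R / r)) r t))
           = Limsup at_top (\<lambda>T. ereal (beta (phiT \<phi> T) (1 / T) t))"
proof -
  let ?H = halfplane
  have R0: "R > 0" using \<gamma> R by linarith
  have Hconv: "convex ?H" unfolding halfplane_def by (rule convex_halfspace_Re_gt)
  have one: "1 \<in> ?H" by (simp add: halfplane_def)
  have \<phi>nz: "\<phi> \<xi> \<noteq> 0" if "\<xi> \<in> ?H" for \<xi>
  proof -
    have "\<phi> \<xi> \<in> \<Omega>" using \<phi>_onto that by blast
    hence "cmod (\<phi> \<xi>) > exp \<gamma>" using \<Omega>_sub by blast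
    thus ?thesis by (metis exp_gt_zero norm_zero not_less_iff_gr_or_eq)
  qed
  have holD: "deriv \<phi> holomorphic_on ?H" by (rule holomorphic_deriv[OF \<phi>_hol halfplane_open])
  have d\<phi>nz: "deriv \<phi> \<xi> \<noteq> 0" if "\<xi> \<in> ?H" for \<xi>
    by (rule holomorphic_injective_imp_regular[OF \<phi>_hol halfplane_open \<phi>_inj that])
  have ballH: "ball \<xi> (Re \<xi>) \<subseteq> ?H" for \<xi>
  proof
    fix z assume "z \<in> ball \<xi> (Re \<xi>)"
    hence "cmod (\<xi> - z) < Re \<xi>" by (simp add: dist_norm)
    moreover have "\<bar>Re (\<xi> - z)\<bar> \<le> cmod (\<xi> - z)" by (rule abs_Re_le_cmod)
    ultimately show "z \<in> ?H" by (simp add: halfplane_def)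
  qed
  have ReH: "Re \<xi> > 0" if "\<xi> \<in> ?H" for \<xi> using that by (simp add: halfplane_def)
  obtain C :: real where C: "C > 0" and WK:
    "\<And>F a \<rho> w. F holomorphic_on ball a \<rho> \<Longrightarrow> inj_on F (ball a \<rho>) \<Longrightarrow> 0 < \<rho> \<Longrightarrow>
       w \<notin> F ` ball a \<rho> \<Longrightarrow> cmod (deriv F a) * \<rho> \<le> C * cmod (F a - w)"
    using weak_koebe by metis
  obtain K :: real where K: "K > 0" and DK:
    "\<And>F a \<rho>. F holomorphic_on ball a \<rho> \<Longrightarrow> inj_on F (ball a \<rho>) \<Longrightarrow> 0 < \<rho> \<Longrightarrow>
       cmod (deriv (deriv F) a) * \<rho> \<le> K * cmod (deriv F a)"
    using distortion by metis
  define K0 where "K0 = max C K"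
  have K0: "K0 > 0" "C \<le> K0" "K \<le> K0" using C K by (auto simp: K0_def)
  obtain L1 where holL1: "L1 holomorphic_on ?H" and eL1: "\<And>\<xi>. \<xi> \<in> ?H \<Longrightarrow> exp (L1 \<xi>) = \<phi> \<xi>"
    using holomorphic_logarithm_exists[OF Hconv halfplane_open \<phi>_hol \<phi>nz one] by metis
  obtain L2 where holL2: "L2 holomorphic_on ?H" and eL2: "\<And>\<xi>. \<xi> \<in> ?H \<Longrightarrow> exp (L2 \<xi>) = deriv \<phi> \<xi>"
    using holomorphic_logarithm_exists[OF Hconv halfplane_open holD d\<phi>nz one] by metis
  have bd1: "cmod (deriv L1 \<xi>) * Re \<xi> \<le> K0" if \<xi>: "\<xi> \<in> ?H" for \<xi>
  proof -
    have "cmod (deriv \<phi> \<xi>) * Re \<xi> \<le> C * cmod (\<phi> \<xi> - 0)"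
    proof (rule WK)
      show "\<phi> holomorphic_on ball \<xi> (Re \<xi>)" using \<phi>_hol ballH by (rule holomorphic_on_subset)
      show "inj_on \<phi> (ball \<xi> (Re \<xi>))" using \<phi>_inj ballH by (rule inj_on_subset)
      show "0 < Re \<xi>" using ReH[OF \<xi>] .
      show "0 \<notin> \<phi> ` ball \<xi> (Re \<xi>)"
      proof
        assume "0 \<in> \<phi> ` ball \<xi> (Re \<xi>)"
        then obtain z where z: "z \<in> ball \<xi> (Re \<xi>)" and z0: "0 = \<phi> z" by blast
        have "z \<in> ?H" using z ballH by blast
        then show False using \<phi>nz z0 by metis
      qed
    qed
    moreover have "deriv \<phi> \<xi> = \<phi> \<xi> * deriv L1 \<xi>"
      by (rule deriv_exp_log[OF holL1 halfplane_open eL1 \<xi>])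
    ultimately have "cmod (\<phi> \<xi>) * (cmod (deriv L1 \<xi>) * Re \<xi>) \<le> cmod (\<phi> \<xi>) * C"
      by (simp add: norm_mult algebra_simps)
    hence "cmod (deriv L1 \<xi>) * Re \<xi> \<le> C" using \<phi>nz[OF \<xi>] by simp
    thus ?thesis using K0 by linarith
  qed
  have bd2: "cmod (deriv L2 \<xi>) * Re \<xi> \<le> K0" if \<xi>: "\<xi> \<in> ?H" for \<xi>
  proof -
    have "cmod (deriv (deriv \<phi>) \<xi>) * Re \<xi> \<le> K * cmod (deriv \<phi> \<xi>)"
    proof (rule DK)
      show "\<phi> holomorphic_on ball \<xi> (Re \<xi>)" using \<phi>_hol ballH by (rule holomorphic_on_subset)
      show "inj_on \<phi> (ball \<xi> (Re \<xi>))" using \<phi>_inj ballH by (rule inj_on_subset)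
      show "0 < Re \<xi>" using ReH[OF \<xi>] .
    qed
    moreover have "deriv (deriv \<phi>) \<xi> = deriv \<phi> \<xi> * deriv L2 \<xi>"
      by (rule deriv_exp_log[OF holL2 halfplane_open eL2 \<xi>])
    ultimately have "cmod (deriv \<phi> \<xi>) * (cmod (deriv L2 \<xi>) * Re \<xi>) \<le> cmod (deriv \<phi> \<xi>) * K"
      by (simp add: norm_mult algebra_simps)
    hence "cmod (deriv L2 \<xi>) * Re \<xi> \<le> K" using d\<phi>nz[OF \<xi>] by simp
    thus ?thesis using K0 by linarith
  qed
  define A where "A S = Re (L1 (of_real S))" for S :: real
  define B where "B z = Re (L2 z)" for z
  have ReD: "\<bar>Re u - Re v\<bar> \<le> cmod (u - v)" for u v :: complex
    using abs_Re_le_cmod[of "u - v"] by simp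
  have P1: "\<bar>A T - A 1\<bar> \<le> K0 * ln T" if "T \<ge> 1" for T
  proof -
    have "cmod (L1 (Complex T 0) - L1 (Complex 1 0)) \<le> K0 * \<bar>ln T - ln 1\<bar>"
      using that by (intro path_horiz[OF holL1 bd1]) auto
    thus ?thesis using ReD[of "L1 (Complex T 0)" "L1 (Complex 1 0)"] that
      by (simp add: A_def complex_of_real_def)
  qed
  have P2: "\<bar>B (Complex 1 (T * y)) - B (Complex 1 0)\<bar> \<le> 2 * K0 * ln T + 2 * K0"
    if T: "T \<ge> 1" and y: "\<bar>y\<bar> \<le> 2" for T y
  proof -
    have h1: "cmod (L2 (Complex 1 (T * y)) - L2 (Complex T (T * y))) \<le> K0 * \<bar>ln 1 - ln T\<bar>"
      using T by (intro path_horiz[OF holL2 bd2]) auto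
    have h2: "cmod (L2 (Complex T (T * y)) - L2 (Complex T 0)) \<le> K0 / T * \<bar>T * y - 0\<bar>"
      using T by (intro path_vert[OF holL2 bd2]) auto
    have h3: "cmod (L2 (Complex T 0) - L2 (Complex 1 0)) \<le> K0 * \<bar>ln T - ln 1\<bar>"
      using T by (intro path_horiz[OF holL2 bd2]) auto
    have "K0 / T * \<bar>T * y - 0\<bar> = K0 * \<bar>y\<bar>" using T by (simp add: abs_mult)
    also have "\<dots> \<le> K0 * 2" using y K0 by (intro mult_left_mono) auto
    finally have h2': "cmod (L2 (Complex T (T * y)) - L2 (Complex T 0)) \<le> 2 * K0" using h2 by linarith
    have lnT: "ln T \<ge> 0" using T by simp
    have "\<bar>B (Complex 1 (T * y)) - B (Complex 1 0)\<bar> \<le>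
          cmod (L2 (Complex 1 (T * y)) - L2 (Complex T (T * y))) +
          cmod (L2 (Complex T (T * y)) - L2 (Complex T 0)) +
          cmod (L2 (Complex T 0) - L2 (Complex 1 0))"
      using ReD[of "L2 (Complex 1 (T * y))" "L2 (Complex T (T * y))"]
            ReD[of "L2 (Complex T (T * y))" "L2 (Complex T 0)"]
            ReD[of "L2 (Complex T 0)" "L2 (Complex 1 0)"]
      unfolding B_def by linarith
    thus ?thesis using h1 h2' h3 lnT by (simp add: abs_minus_commute)
  qed
  have P3: "\<bar>B (Complex R s) - B (Complex 1 s)\<bar> \<le> K0 * \<bar>ln R\<bar>" for s
  proof -
    have "cmod (L2 (Complex R s) - L2 (Complex 1 s)) \<le> K0 * \<bar>ln R - ln 1\<bar>"
      using R0 by (intro path_horiz[OF holL2 bd2]) auto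
    thus ?thesis using ReD[of "L2 (Complex R s)" "L2 (Complex 1 s)"] by (simp add: B_def)
  qed
  have integrand: "cmod (deriv (phiT \<phi> S) (Complex x y)) powr t = exp (t * (ln S + B (Complex (S * x) (S * y)) - A S))"
    if S: "S > 0" and x: "x > 0" for S x y
  proof -
    have m1: "Complex (S * x) (S * y) \<in> ?H" using S x by (simp add: halfplane_def)
    have m2: "of_real S \<in> ?H" using S by (simp add: halfplane_def)
    have c1: "cmod (deriv \<phi> (Complex (S * x) (S * y))) = exp (B (Complex (S * x) (S * y)))"
      using eL2[OF m1] by (metis B_def norm_exp_eq_Re)
    have c2: "cmod (\<phi> (of_real S)) = exp (A S)"
      using eL1[OF m2] by (metis A_def norm_exp_eq_Re)
    have "cmod (deriv (phiT \<phi> S) (Complex x y)) = S * exp (B (Complex (S * x) (S * y))) / exp (A S)"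
      using S by (simp add: deriv_phiT[OF \<phi>_hol S x] norm_mult norm_divide c1 c2)
    moreover have "ln (S * exp (B (Complex (S * x) (S * y))) / exp (A S)) = ln S + B (Complex (S * x) (S * y)) - A S"
      using S by (simp add: ln_mult ln_div)
    ultimately show ?thesis using S by (simp add: powr_def mult.commute)
  qed
  have contB: "continuous_on Iset (\<lambda>y. B (Complex x (S * y)))" if x: "x > 0" for x S
  proof -
    have cL2: "continuous_on ?H (\<lambda>z. B z)" unfolding B_def
      using holomorphic_on_imp_continuous_on[OF holL2] by (intro continuous_intros)
    have cC: "continuous_on Iset (\<lambda>y. Complex x (S * y))"
      unfolding Complex_eq by (intro continuous_intros)
    have "(\<lambda>y. Complex x (S * y)) ` Iset \<subseteq> ?H" using x by (auto simp: halfplane_def)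
    from continuous_on_compose2[OF cL2 cC this] show ?thesis .
  qed
  define E1 where "E1 S y = t * (ln S + B (Complex 1 (S * y)) - A S)" for S y
  define E2 where "E2 S y = t * (ln S + B (Complex R (S * y)) - A S)" for S y
  define J1 where "J1 S = integral Iset (\<lambda>y. exp (E1 S y))" for S
  define J2 where "J2 S = integral Iset (\<lambda>y. exp (E2 S y))" for S
  have cE1: "continuous_on Iset (E1 S)" for S
    unfolding E1_def using contB[of 1 S] by (intro continuous_intros) auto
  have cE2: "continuous_on Iset (E2 S)" for S
    unfolding E2_def using contB[OF R0, of S] by (intro continuous_intros) auto
  define f1 where "f1 S = beta (phiT \<phi> S) (1 / S) t" for S
  define g where "g T = beta (phiT \<phi> (R * T)) (1 / T) t" for T
  have f1_eq: "f1 S = ln (J1 S) / ln S" if S: "S > 0" for S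
  proof -
    have "(\<lambda>y. cmod (deriv (phiT \<phi> S) (Complex (1 / S) y)) powr t) = (\<lambda>y. exp (E1 S y))"
      using S by (simp add: integrand E1_def)
    thus ?thesis using S by (simp add: f1_def beta_def J1_def)
  qed
  have g_eq: "g T = ln (J2 (R * T)) / ln T" if T: "T > 0" for T
  proof -
    have "(\<lambda>y. cmod (deriv (phiT \<phi> (R * T)) (Complex (1 / T) y)) powr t) = (\<lambda>y. exp (E2 (R * T) y))"
      using T R0 by (simp add: integrand E2_def)
    thus ?thesis using T by (simp add: g_def beta_def J2_def)
  qed
  define c0 where "c0 = t * (B (Complex 1 0) - A 1)"
  define M1 where "M1 = \<bar>c0\<bar> + ln 2 + 2 * \<bar>t\<bar> * K0 + \<bar>t\<bar> * (1 + 3 * K0)"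
  have KB1: "\<bar>ln (J1 S) - (c0 + ln 2)\<bar> \<le> \<bar>t\<bar> * ((1 + 3 * K0) * ln S + 2 * K0)" if S: "S \<ge> 1" for S
  proof -
    have lnS: "ln S \<ge> 0" using S by simp
    have pt: "\<bar>E1 S y - c0\<bar> \<le> \<bar>t\<bar> * ((1 + 3 * K0) * ln S + 2 * K0)" if y: "y \<in> Iset" for y
    proof -
      have yb: "\<bar>y\<bar> \<le> 2" using y by (auto simp: Iset_def)
      have "E1 S y - c0 = t * (ln S + (B (Complex 1 (S * y)) - B (Complex 1 0)) - (A S - A 1))"
        by (simp add: E1_def c0_def algebra_simps)
      hence "\<bar>E1 S y - c0\<bar> = \<bar>t\<bar> * \<bar>ln S + (B (Complex 1 (S * y)) - B (Complex 1 0)) - (A S - A 1)\<bar>"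
        by (simp add: abs_mult)
      also have "\<dots> \<le> \<bar>t\<bar> * ((1 + 3 * K0) * ln S + 2 * K0)"
        using P1[OF S] P2[OF S yb] lnS by (intro mult_left_mono) (auto simp: algebra_simps)
      finally show ?thesis .
    qed
    have "\<bar>ln (J1 S) - ln (integral Iset (\<lambda>y. exp c0))\<bar> \<le> \<bar>t\<bar> * ((1 + 3 * K0) * ln S + 2 * K0)"
      unfolding J1_def by (rule Iset_ln_bound[OF cE1 continuous_on_const pt])
    moreover have "ln (integral Iset (\<lambda>y. exp c0)) = c0 + ln 2"
      by (simp add: Iset_const ln_mult)
    ultimately show ?thesis by simp
  qed
  have KB2: "\<bar>ln (J1 S)\<bar> \<le> M1 * ln S" if S: "S \<ge> exp 1" for S
  proof -
    have S1: "S \<ge> 1" using S by (meson exp_ge_add_one_self order_trans add_increasing2 order_refl zero_le_one)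
    have lnS: "ln S \<ge> 1" using S by (metis exp_gt_zero ln_exp ln_le_cancel_iff order_less_le_trans)
    have "\<bar>ln (J1 S)\<bar> \<le> \<bar>c0\<bar> + ln 2 + \<bar>t\<bar> * ((1 + 3 * K0) * ln S + 2 * K0)"
    proof -
      have l2: "ln (2::real) > 0" by simp
      have k: "ln (J1 S) - (c0 + ln 2) \<le> \<bar>t\<bar> * ((1 + 3 * K0) * ln S + 2 * K0) \<and>
               c0 + ln 2 - ln (J1 S) \<le> \<bar>t\<bar> * ((1 + 3 * K0) * ln S + 2 * K0)"
        using KB1[OF S1] unfolding abs_le_iff by linarith
      show ?thesis using k l2 abs_ge_self[of c0] abs_ge_minus_self[of c0]
        unfolding abs_le_iff by (intro conjI) linarith+
    qed
    also have "\<dots> = (\<bar>c0\<bar> + ln 2 + 2 * \<bar>t\<bar> * K0) + \<bar>t\<bar> * (1 + 3 * K0) * ln S"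
      by (simp add: algebra_simps)
    also have "\<dots> \<le> (\<bar>c0\<bar> + ln 2 + 2 * \<bar>t\<bar> * K0) * ln S + \<bar>t\<bar> * (1 + 3 * K0) * ln S"
    proof -
      have P0: "0 \<le> \<bar>c0\<bar> + ln 2 + 2 * \<bar>t\<bar> * K0" using K0 by simp
      have "(\<bar>c0\<bar> + ln 2 + 2 * \<bar>t\<bar> * K0) * 1 \<le> (\<bar>c0\<bar> + ln 2 + 2 * \<bar>t\<bar> * K0) * ln S"
        using lnS P0 by (rule mult_left_mono)
      then show ?thesis by simp
    qed
    also have "\<dots> = M1 * ln S" by (simp add: M1_def algebra_simps)
    finally show ?thesis .
  qed
  have KB3: "\<bar>ln (J2 S) - ln (J1 S)\<bar> \<le> \<bar>t\<bar> * (K0 * \<bar>ln R\<bar>)" for S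
  proof -
    have "\<bar>E2 S y - E1 S y\<bar> \<le> \<bar>t\<bar> * (K0 * \<bar>ln R\<bar>)" for y
    proof -
      have "\<bar>E2 S y - E1 S y\<bar> = \<bar>t\<bar> * \<bar>B (Complex R (S * y)) - B (Complex 1 (S * y))\<bar>"
        by (simp add: E1_def E2_def abs_mult flip: right_diff_distrib)
      also have "\<dots> \<le> \<bar>t\<bar> * (K0 * \<bar>ln R\<bar>)" using P3 by (intro mult_left_mono) auto
      finally show ?thesis .
    qed
    then show ?thesis unfolding J1_def J2_def by (intro Iset_ln_bound cE1 cE2)
  qed
  have evb: "eventually (\<lambda>S. \<bar>f1 S\<bar> \<le> M1) at_top"
    using eventually_ge_at_top[of "exp 1"]
  proof eventually_elim
    case (elim S)
    have S0: "S > 0" using elim by (meson exp_gt_zero order_less_le_trans)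
    have lnS: "ln S \<ge> 1" using elim by (metis exp_gt_zero ln_exp ln_le_cancel_iff order_less_le_trans)
    have "\<bar>f1 S\<bar> = \<bar>ln (J1 S)\<bar> / ln S" using lnS by (simp add: f1_eq[OF S0] abs_div)
    also have "\<dots> \<le> M1" using KB2[OF elim] lnS by (simp add: pos_divide_le_eq)
    finally show ?case .
  qed
  have up: "Limsup at_top (\<lambda>S. ereal (f1 S)) \<le> ereal M1"
    by (rule Limsup_bounded) (use evb in \<open>auto elim!: eventually_mono\<close>)
  have lo: "ereal (- M1) \<le> Liminf at_top (\<lambda>S. ereal (f1 S))"
    by (rule Liminf_bounded) (use evb in \<open>auto elim!: eventually_mono\<close>)
  have "Liminf at_top (\<lambda>S. ereal (f1 S)) \<le> Limsup at_top (\<lambda>S. ereal (f1 S))"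
    by (rule Liminf_le_Limsup) simp
  hence fin1: "Limsup at_top (\<lambda>S. ereal (f1 S)) \<noteq> \<infinity>" "Limsup at_top (\<lambda>S. ereal (f1 S)) \<noteq> -\<infinity>"
    using up lo by auto
  have tend: "((\<lambda>T. g T - f1 (R * T)) \<longlongrightarrow> 0) at_top"
  proof (rule Lim_null_comparison)
    define D where "D = \<bar>t\<bar> * (K0 * \<bar>ln R\<bar>)"
    show "((\<lambda>T. (D + M1 * \<bar>ln R\<bar>) / ln T) \<longlongrightarrow> 0) at_top"
      by (rule tendsto_divide_0[OF tendsto_const filterlim_at_top_imp_at_infinity[OF ln_at_top]])
    have ev: "eventually (\<lambda>T. T \<ge> max (exp 1) (exp 1 / R)) at_top" by (rule eventually_ge_at_top)
    show "eventually (\<lambda>T. norm (g T - f1 (R * T)) \<le> (D + M1 * \<bar>ln R\<bar>) / ln T) at_top"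
      using ev
    proof eventually_elim
      case (elim T)
      have T1: "T \<ge> exp 1" using elim by simp
      have T0: "T > 0" using T1 by (meson exp_gt_zero order_less_le_trans)
      have lnT: "ln T \<ge> 1" using T1 by (metis exp_gt_zero ln_exp ln_le_cancel_iff order_less_le_trans)
      have "exp 1 / R \<le> T" using elim by simp
      hence S1: "R * T \<ge> exp 1" using R0 by (simp add: field_simps)
      have S0: "R * T > 0" using R0 T0 by simp
      have e1: "1 < exp (1::real)" by simp
      have Tgt1: "T > 1" using e1 T1 by linarith
      have lnS: "ln (R * T) \<ge> 1" using S1 by (metis exp_gt_zero ln_exp ln_le_cancel_iff order_less_le_trans)
      have "\<bar>ln (J2 (R * T)) / ln T - ln (J1 (R * T)) / ln (R * T)\<bar> \<le> (D + M1 * \<bar>ln R\<bar>) / ln T"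
        using lnT lnS KB3[of "R * T"] KB2[OF S1] R0 T0 Tgt1
        by (intro alg_bound) (auto simp: D_def ln_mult)
      thus ?case by (simp add: g_eq[OF T0] f1_eq[OF S0])
    qed
  qed
  have "Limsup (at_right 0) (\<lambda>r. ereal (beta (phiT \<phi> (R / r)) r t))
        = Limsup (at_right 0) (\<lambda>r. (\<lambda>T. ereal (g T)) (inverse r))"
    by (simp add: g_def divide_inverse)
  also have "\<dots> = Limsup at_top (\<lambda>T. ereal (g T))" by (rule Limsup_inverse)
  also have "\<dots> = Limsup at_top (\<lambda>T. ereal (f1 (R * T)))" by (rule Limsup_diff_eq[OF tend])
  also have "\<dots> = Limsup at_top (\<lambda>S. ereal (f1 S))" by (rule Limsup_scale[OF R0])
  finally have eq2: "Limsup (at_right 0) (\<lambda>r. ereal (beta (phiT \<phi> (R / r)) r t))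
        = Limsup at_top (\<lambda>S. ereal (f1 S))" .
  show ?thesis using fin1 eq2 unfolding f1_def by simp
qed

end
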